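(* Assume (A1) the parameter space $\Theta$ of $\theta=(B,\Omega)$ is compact (this holds, e.g., if the eigenvalues of $\Omega$ are bounded away from $0$ and $\infty$ and the coordinates of $B$ are bounded), and (A2) the variational parameter space $\Psi$ of $\psi=(m,s)$ is bounded. Let $M(\theta)=\mathbb E^\star[L(\theta;Y)]$, and assume that $M$ attains a finite global maximum at some $\bar\theta\in\Theta$ (possibly different from $\theta^\star$). Then $\widehat\theta^{\mathrm{ve}}\to\bar\theta$ (in probability) under $p_{\theta^\star}$ as $n\to\infty$.
   Context: Poisson-lognormal (PLN) model: for observations $i=1,\dots,n$, with covariates $x_i\in\mathbb R^m$ and offsets $o_i\in\mathbb R^p$, latent vectors $Z_i\sim\mathcal N_p(0,\Omega^{-1})$ are independent and, given $Z_i$, the coordinates of $Y_i\in\mathbb N^p$ are independent with $Y_{ij}\mid Z_i\sim\mathcal P(\exp(o_{ij}+x_i^\top B_j+Z_{ij}))$, where $B\in\mathcal M_{m,p}(\mathbb R)$ has columns $B_j$ and $\Omega$ is a symmetric positive definite $p\times p$ precision matrix. The parameter is $\theta=(B,\Omega)$; the data are generated under a true parameter $\theta^\star\in\Theta$, and $p_{\theta^\star}$, $\mathbb E^\star$ denote the distribution/expectation under it. Variational parameters are $\psi=(m,s)$ with $m\in\mathbb R^p$, $s\in(0,\infty)^p$. For a generic observation $Y$ with covariate $x$ and offset $o$, the single-observation ELBO is $J(\theta,\psi)=Y^\top(o+m+B^\top x)-\tilde a^\top 1_p-\sum_j\log(Y_j!)+\tfrac12\log|\Omega|-\tfrac12 m^\top\Omega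 m-\tfrac12\mathrm{diag}(\Omega)^\top s^2+\sum_j\log s_j+\tfrac p2$, where $\tilde a_j=\exp(o_j+x^\top B_j+m_j+s_j^2/2)$ and squares are elementwise; $J_i(\theta,\psi_i)$ denotes the same expression for observation $i$. The profiled objective is $L(\theta;Y)=\sup_{\psi\in\Psi}J(\theta,\psi)$, and the variational estimator $\widehat\theta^{\mathrm{ve}}$ is a maximizer over $\Theta$ of $\frac1n\sum_{i=1}^n L(\theta;Y_i)$ (equivalently, the $\theta$-part of a joint maximizer of $\sum_i J_i(\theta,\psi_i)$). *)

theory Defs
  imports "HOL-Probability.Probability"
begin

text \<open>Index types: 'p indexes the p species (coordinates of Y, Z, off, m, s),
  'm indexes the m covariates.  B :: real^'p^'m has entries B$k$j (k covariate, j species),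
  so its column B_j is (\<chi> k. B$k$j) and x^T B_j = \<Sum>k. x$k * B$k$j.\<close>

definition xB :: "real^'m \<Rightarrow> real^'p^'m \<Rightarrow> 'p \<Rightarrow> real" where
  "xB x B j = (\<Sum>k\<in>UNIV. x$k * B$k$j)"

definition sym_posdef :: "real^'p^'p \<Rightarrow> bool" where
  "sym_posdef \<Omega> \<longleftrightarrow> transpose \<Omega> = \<Omega> \<and> (\<forall>v. v \<noteq> 0 \<longrightarrow> v \<bullet> (\<Omega> *v v) > 0)"

definition gauss_prec_density :: "real^'p^'p \<Rightarrow> real^'p \<Rightarrow> real" where
  "gauss_prec_density \<Omega> z =
     (2 * pi) powr (- real CARD('p) / 2) * sqrt (det \<Omega>) * exp (- (z \<bullet> (\<Omega> *v z)) / 2)"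

definition poisson_pmf_val :: "real \<Rightarrow> nat \<Rightarrow> real" where
  "poisson_pmf_val lam k = exp (- lam) * lam ^ k / fact k"

definition pln_pmf :: "(real^'p^'m) \<times> (real^'p^'p) \<Rightarrow> real^'m \<Rightarrow> real^'p \<Rightarrow> nat^'p \<Rightarrow> real" where
  "pln_pmf \<theta> x off y =
     (\<integral>z. gauss_prec_density (snd \<theta>) z *
           (\<Prod>j\<in>UNIV. poisson_pmf_val (exp (off$j + xB x (fst \<theta>) j + z$j)) (y$j)) \<partial>lborel)"

definition pln_measure :: "(real^'p^'m) \<times> (real^'p^'p) \<Rightarrow> real^'m \<Rightarrow> real^'p \<Rightarrow> (nat^'p) measure" where
  "pln_measure \<theta> x off = density (count_space UNIV) (\<lambda>y. ennreal (pln_pmf \<theta> x off y))"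

definition elbo :: "real^'m \<Rightarrow> real^'p \<Rightarrow> nat^'p \<Rightarrow> (real^'p^'m) \<times> (real^'p^'p)
                     \<Rightarrow> (real^'p) \<times> (real^'p) \<Rightarrow> real" where
  "elbo x off y \<theta> \<psi> =
     (let B = fst \<theta>; \<Omega> = snd \<theta>; m = fst \<psi>; s = snd \<psi> in
       (\<Sum>j\<in>UNIV. real (y$j) * (off$j + m$j + xB x B j))
       - (\<Sum>j\<in>UNIV. exp (off$j + xB x B j + m$j + (s$j)\<^sup>2 / 2))
       - (\<Sum>j\<in>UNIV. ln (fact (y$j)))
       + ln (det \<Omega>) / 2
       - (m \<bullet> (\<Omega> *v m)) / 2
       - (\<Sum>j\<in>UNIV. \<Omega>$j$j * (s$j)\<^sup>2) / 2
       + (\<Sum>j\<in>UNIV. ln (s$j))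
       + real CARD('p) / 2)"

definition profiled :: "((real^'p) \<times> (real^'p)) set \<Rightarrow> real^'m \<Rightarrow> real^'p
                         \<Rightarrow> (real^'p^'m) \<times> (real^'p^'p) \<Rightarrow> nat^'p \<Rightarrow> real" where
  "profiled \<Psi> x off \<theta> y = (SUP \<psi>\<in>\<Psi>. elbo x off y \<theta> \<psi>)"

end

theory Submission
  imports Defs
begin


lemma (in prob_space) wlln_real:
  fixes X :: "nat \<Rightarrow> 'a \<Rightarrow> real"
  assumes ind: "indep_vars (\<lambda>_. borel) X UNIV"
    and dst: "\<And>i. distr M borel (X i) = distr M borel (X 0)"
    and int: "integrable M (X 0)"
    and a: "a > 0"
  shows "(\<lambda>n. prob {\<omega>\<in>space M. a \<le> \<bar>(\<Sum>i<n. X i \<omega>)/real n - expectation (X 0)\<bar>}) \<longlonglongrightarrow> 0"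
proof -
  have meas[measurable]: "\<And>i. X i \<in> borel_measurable M" using ind unfolding indep_vars_def by auto
  have tr: "integrable M (\<lambda>\<omega>. h (X i \<omega>)) \<and> expectation (\<lambda>\<omega>. h (X i \<omega>)) = expectation (\<lambda>\<omega>. h (X 0 \<omega>))"
    if hm: "h \<in> borel_measurable borel" and hi: "integrable M (\<lambda>\<omega>. h (X 0 \<omega>))" for h :: "real \<Rightarrow> real" and i
  proof -
    have "integrable (distr M borel (X 0)) h" using hi hm by (subst integrable_distr_eq) auto
    then have "integrable (distr M borel (X i)) h" using dst[of i] by simp
    then have 1: "integrable M (\<lambda>\<omega>. h (X i \<omega>))" using hm by (subst (asm) integrable_distr_eq) auto
    have "expectation (\<lambda>\<omega>. h (X i \<omega>)) = integral\<^sup>L (distr M borel (X i)) h"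
      using hm by (subst integral_distr) auto
    also have "\<dots> = integral\<^sup>L (distr M borel (X 0)) h" using dst[of i] by simp
    also have "\<dots> = expectation (\<lambda>\<omega>. h (X 0 \<omega>))" using hm by (subst integral_distr) auto
    finally show ?thesis using 1 by simp
  qed
  show ?thesis
  proof (rule LIMSEQ_I)
    fix r :: real assume r: "r > 0"
    define \<eta> where "\<eta> = min (a/4) (r*a/8)"
    have \<eta>: "\<eta> > 0" using a r by (simp add: \<eta>_def)
    define cl where "cl k x = max (- real (Suc k)) (min (real (Suc k)) x)" for k and x :: real
    have cl_meas[measurable]: "cl k \<in> borel_measurable borel" for k unfolding cl_def by measurable
    have "(\<lambda>k. expectation (\<lambda>\<omega>. \<bar>X 0 \<omega> - cl k (X 0 \<omega>)\<bar>)) \<longlonglongrightarrow> expectation (\<lambda>\<omega>. 0)"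
    proof (rule integral_dominated_convergence[where w="\<lambda>\<omega>. \<bar>X 0 \<omega>\<bar>"])
      show "integrable M (\<lambda>\<omega>. \<bar>X 0 \<omega>\<bar>)" using int by simp
      show "AE \<omega> in M. (\<lambda>k. \<bar>X 0 \<omega> - cl k (X 0 \<omega>)\<bar>) \<longlonglongrightarrow> 0"
      proof (rule AE_I2)
        fix \<omega>
        obtain N :: nat where "\<bar>X 0 \<omega>\<bar> \<le> real N" using real_arch_simple by blast
        then have "\<forall>k\<ge>N. \<bar>X 0 \<omega> - cl k (X 0 \<omega>)\<bar> = 0" unfolding cl_def by auto
        then show "(\<lambda>k. \<bar>X 0 \<omega> - cl k (X 0 \<omega>)\<bar>) \<longlonglongrightarrow> 0"
          by (intro tendsto_eventually) (auto simp: eventually_sequentially)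
      qed
      show "\<And>k. AE \<omega> in M. norm \<bar>X 0 \<omega> - cl k (X 0 \<omega>)\<bar> \<le> \<bar>X 0 \<omega>\<bar>"
        unfolding cl_def by (intro AE_I2) auto
    qed auto
    then have "eventually (\<lambda>k. expectation (\<lambda>\<omega>. \<bar>X 0 \<omega> - cl k (X 0 \<omega>)\<bar>) < \<eta>) sequentially"
      using \<eta> by (simp add: order_tendstoD(2))
    then obtain k where k: "expectation (\<lambda>\<omega>. \<bar>X 0 \<omega> - cl k (X 0 \<omega>)\<bar>) < \<eta>"
      by (auto simp: eventually_sequentially)
    define K where "K = real (Suc k)"
    have K: "K > 0" by (simp add: K_def)
    define \<phi> where "\<phi> = cl k"
    have phi_bd: "\<bar>\<phi> x\<bar> \<le> K" for x unfolding \<phi>_def cl_def K_def by auto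
    have phi_diff: "\<bar>x - \<phi> x\<bar> \<le> \<bar>x\<bar>" for x unfolding \<phi>_def cl_def by auto
    have [measurable]: "\<phi> \<in> borel_measurable borel" unfolding \<phi>_def by simp
    define U where "U i \<omega> = \<phi> (X i \<omega>)" for i \<omega>
    define V where "V i \<omega> = X i \<omega> - \<phi> (X i \<omega>)" for i \<omega>
    have [measurable]: "U i \<in> borel_measurable M" "V i \<in> borel_measurable M" for i
      unfolding U_def V_def by measurable
    have intU0: "integrable M (U 0)"
      by (rule integrable_const_bound[where B=K]) (auto simp: U_def phi_bd)
    have intV0: "integrable M (\<lambda>\<omega>. \<bar>V 0 \<omega>\<bar>)"
      by (rule Bochner_Integration.integrable_bound[OF integrable_abs[OF int]]) (auto simp: V_def phi_diff)
    have intV0': "integrable M (V 0)" using intV0 by (subst (asm) integrable_abs_iff) auto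
    define mu where "mu = expectation (U 0)"
    define mv where "mv = expectation (V 0)"
    have EX: "expectation (X 0) = mu + mv"
    proof -
      have "X 0 = (\<lambda>\<omega>. U 0 \<omega> + V 0 \<omega>)" by (auto simp: U_def V_def)
      then show ?thesis unfolding mu_def mv_def using intU0 intV0' by simp
    qed
    have EV: "expectation (\<lambda>\<omega>. \<bar>V 0 \<omega>\<bar>) < \<eta>" using k by (simp add: V_def \<phi>_def)
    have mv_bd: "\<bar>mv\<bar> < a/3"
    proof -
      have "\<bar>mv\<bar> \<le> expectation (\<lambda>\<omega>. \<bar>V 0 \<omega>\<bar>)" unfolding mv_def
        using integral_norm_bound[of M "V 0"] by simp
      then show ?thesis using EV \<eta>_def a by simp
    qed
    have trU: "integrable M (U i) \<and> expectation (U i) = mu" for i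
      using tr[of \<phi> i] intU0 unfolding mu_def U_def[abs_def] by simp
    have trV: "integrable M (\<lambda>\<omega>. \<bar>V i \<omega>\<bar>) \<and> expectation (\<lambda>\<omega>. \<bar>V i \<omega>\<bar>) = expectation (\<lambda>\<omega>. \<bar>V 0 \<omega>\<bar>)" for i
      using tr[of "\<lambda>x. \<bar>x - \<phi> x\<bar>" i] intV0 by (simp add: V_def)
    define W where "W i \<omega> = U i \<omega> - mu" for i \<omega>
    have [measurable]: "W i \<in> borel_measurable M" for i unfolding W_def by measurable
    have W_bd: "\<bar>W i \<omega>\<bar> \<le> 2*K" for i \<omega>
    proof -
      have "\<bar>mu\<bar> \<le> K"
      proof -
        have "\<bar>mu\<bar> \<le> expectation (\<lambda>\<omega>. \<bar>U 0 \<omega>\<bar>)" unfolding mu_def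
          using integral_norm_bound[of M "U 0"] by simp
        also have "\<dots> \<le> expectation (\<lambda>\<omega>. K)"
          by (rule integral_mono) (auto simp: phi_bd U_def intro: integrable_abs[OF intU0[unfolded U_def[abs_def]]])
        finally show ?thesis by (simp add: prob_space)
      qed
      then show ?thesis using phi_bd[of "X i \<omega>"] by (simp add: W_def U_def)
    qed
    have intW: "integrable M (W i)" for i
      by (rule integrable_const_bound[where B="2*K"]) (auto simp: W_bd)
    have EW: "expectation (W i) = 0" for i
      using trU[of i] unfolding W_def[abs_def] by (subst Bochner_Integration.integral_diff) (auto simp: prob_space)
    have indW: "indep_vars (\<lambda>_. borel) W UNIV"
    proof -
      have "indep_vars (\<lambda>_. borel) (\<lambda>i \<omega>. (\<lambda>x. \<phi> x - mu) (X i \<omega>)) UNIV"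
        by (rule indep_vars_compose2[OF ind]) measurable
      then show ?thesis unfolding W_def[abs_def] U_def[abs_def] by simp
    qed
    have WW_bd: "\<bar>W i \<omega> * W j \<omega>\<bar> \<le> 4*K^2" for i j \<omega>
    proof -
      have "\<bar>W i \<omega>\<bar> * \<bar>W j \<omega>\<bar> \<le> (2*K) * (2*K)"
        by (rule mult_mono) (auto simp: W_bd K less_imp_le)
      then show ?thesis by (simp add: abs_mult power2_eq_square)
    qed
    have EWW: "expectation (\<lambda>\<omega>. W i \<omega> * W j \<omega>) \<le> (if i = j then 4*K^2 else 0)" for i j
    proof (cases "i = j")
      case True
      have "expectation (\<lambda>\<omega>. W i \<omega> * W j \<omega>) \<le> expectation (\<lambda>\<omega>. 4*K^2)"
      proof (rule integral_mono)
        show "integrable M (\<lambda>\<omega>. W i \<omega> * W j \<omega>)"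
          by (rule integrable_const_bound[where B="4*K^2"]) (auto simp: WW_bd)
      qed (auto intro: order.trans[OF abs_ge_self WW_bd])
      then show ?thesis using True by (simp add: prob_space)
    next
      case False
      have "indep_vars (\<lambda>_. borel) W {i, j}" by (rule indep_vars_subset[OF indW]) auto
      then have "expectation (\<lambda>\<omega>. \<Prod>l\<in>{i,j}. W l \<omega>) = (\<Prod>l\<in>{i,j}. expectation (W l))"
        by (intro indep_vars_lebesgue_integral) (auto simp: intW)
      then show ?thesis using False by (simp add: EW)
    qed
    have cheb: "prob {\<omega>\<in>space M. a/3 \<le> \<bar>(\<Sum>i<n. U i \<omega>)/real n - mu\<bar>} \<le> 36*K^2/(real n * a^2)"
      if n: "n \<ge> 1" for n
    proof -
      define f where "f \<omega> = (\<Sum>i<n. W i \<omega>) / real n" for \<omega>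
      have feq: "(\<Sum>i<n. U i \<omega>)/real n - mu = f \<omega>" for \<omega>
        using n by (simp add: f_def W_def sum_subtractf field_simps)
      have [measurable]: "f \<in> borel_measurable M" unfolding f_def by measurable
      have intP: "integrable M (\<lambda>\<omega>. W i \<omega> * W j \<omega>)" for i j
        by (rule integrable_const_bound[where B="4*K^2"]) (auto simp: WW_bd)
      have sq: "(f \<omega>)^2 = (\<Sum>i<n. \<Sum>j<n. W i \<omega> * W j \<omega>) / (real n)^2" for \<omega>
        by (simp add: f_def power_divide power2_eq_square sum_product)
      have intf2: "integrable M (\<lambda>\<omega>. (f \<omega>)^2)" unfolding sq using intP by auto
      have "expectation (\<lambda>\<omega>. (f \<omega>)^2) = (\<Sum>i<n. \<Sum>j<n. expectation (\<lambda>\<omega>. W i \<omega> * W j \<omega>)) / (real n)^2"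
        unfolding sq using intP by (simp add: integral_sum)
      also have "\<dots> \<le> (\<Sum>i<n. \<Sum>j<n. (if i = j then 4*K^2 else 0)) / (real n)^2"
        by (intro divide_right_mono sum_mono EWW) auto
      also have "\<dots> = 4*K^2 / real n" using n by (simp add: power2_eq_square)
      finally have E2: "expectation (\<lambda>\<omega>. (f \<omega>)^2) \<le> 4*K^2 / real n" .
      have "prob {\<omega>\<in>space M. a/3 \<le> \<bar>f \<omega>\<bar>} \<le> expectation (\<lambda>\<omega>. (f \<omega>)^2) / (a/3)^2"
        using a intf2 by (intro second_moment_method) auto
      also have "\<dots> \<le> (4*K^2 / real n) / (a/3)^2"
        using E2 a by (intro divide_right_mono) auto
      also have "\<dots> = 36*K^2/(real n * a^2)" by (simp add: field_simps power2_eq_square)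
      finally show ?thesis by (simp add: feq)
    qed
    have markov: "prob {\<omega>\<in>space M. a/3 \<le> (\<Sum>i<n. \<bar>V i \<omega>\<bar>)/real n} \<le> 3*\<eta>/a"
      if n: "n \<ge> 1" for n
    proof -
      have int1: "integrable M (\<lambda>\<omega>. (\<Sum>i<n. \<bar>V i \<omega>\<bar>)/real n)" using trV by auto
      have "prob {\<omega>\<in>space M. a/3 \<le> (\<Sum>i<n. \<bar>V i \<omega>\<bar>)/real n}
          \<le> expectation (\<lambda>\<omega>. (\<Sum>i<n. \<bar>V i \<omega>\<bar>)/real n) / (a/3)"
        using a int1 by (intro integral_Markov_inequality_measure[where A="space M"]) auto
      also have "expectation (\<lambda>\<omega>. (\<Sum>i<n. \<bar>V i \<omega>\<bar>)/real n) = expectation (\<lambda>\<omega>. \<bar>V 0 \<omega>\<bar>)"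
      proof -
        have "(\<Sum>i<n. expectation (\<lambda>\<omega>. \<bar>V i \<omega>\<bar>)) = (\<Sum>i<n. expectation (\<lambda>\<omega>. \<bar>V 0 \<omega>\<bar>))"
          by (rule sum.cong[OF refl]) (rule conjunct2[OF trV])
        then have "(\<Sum>i<n. expectation (\<lambda>\<omega>. \<bar>V i \<omega>\<bar>)) = real n * expectation (\<lambda>\<omega>. \<bar>V 0 \<omega>\<bar>)"
          by simp
        moreover have "expectation (\<lambda>\<omega>. (\<Sum>i<n. \<bar>V i \<omega>\<bar>)/real n) = (\<Sum>i<n. expectation (\<lambda>\<omega>. \<bar>V i \<omega>\<bar>)) / real n"
          using conjunct1[OF trV] by (simp add: integral_sum)
        ultimately show ?thesis using n by simp
      qed
      also have "\<dots> / (a/3) \<le> \<eta> / (a/3)" using EV a by (intro divide_right_mono) auto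
      finally show ?thesis by (simp add: mult.commute)
    qed
    obtain no :: nat where no: "no \<ge> 1" "36*K^2/(real no * a^2) < r/2"
    proof -
      obtain N :: nat where N: "72*K^2/(r*a^2) < real N" using reals_Archimedean2 by blast
      have pos: "0 < r*a^2" using r a by simp
      have "72*K^2 < real N * (r*a^2)" using N pos by (simp add: divide_less_eq)
      then have h1: "72*K^2 < real (Suc N) * (r*a^2)" using pos by (simp add: distrib_right)
      have pos2: "0 < real (Suc N) * a^2" using a by simp
      have "36*K^2/(real (Suc N) * a^2) < r/2"
        by (subst pos_divide_less_eq[OF pos2]) (use h1 in \<open>simp add: algebra_simps\<close>)
      then show ?thesis by (intro that[of "Suc N"]) auto
    qed
    show "\<exists>no. \<forall>n\<ge>no. norm (prob {\<omega>\<in>space M. a \<le> \<bar>(\<Sum>i<n. X i \<omega>)/real n - expectation (X 0)\<bar>} - 0) < r"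
    proof (intro exI allI impI)
      fix n assume nn: "no \<le> n"
      then have n: "n \<ge> 1" using no by simp
      have sub: "{\<omega>\<in>space M. a \<le> \<bar>(\<Sum>i<n. X i \<omega>)/real n - expectation (X 0)\<bar>}
        \<subseteq> {\<omega>\<in>space M. a/3 \<le> \<bar>(\<Sum>i<n. U i \<omega>)/real n - mu\<bar>} \<union> {\<omega>\<in>space M. a/3 \<le> (\<Sum>i<n. \<bar>V i \<omega>\<bar>)/real n}"
      proof safe
        fix \<omega> assume \<omega>: "\<omega> \<in> space M" and big: "a \<le> \<bar>(\<Sum>i<n. X i \<omega>)/real n - expectation (X 0)\<bar>"
          and no1: "\<not> a/3 \<le> (\<Sum>i<n. \<bar>V i \<omega>\<bar>)/real n"
        have dec: "(\<Sum>i<n. X i \<omega>)/real n - expectation (X 0)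
            = ((\<Sum>i<n. U i \<omega>)/real n - mu) + (\<Sum>i<n. V i \<omega>)/real n - mv"
          by (simp add: EX U_def V_def sum_subtractf diff_divide_distrib add_divide_distrib)
        have "\<bar>(\<Sum>i<n. V i \<omega>)/real n\<bar> \<le> (\<Sum>i<n. \<bar>V i \<omega>\<bar>)/real n"
          by (simp add: divide_right_mono sum_abs)
        then show "a/3 \<le> \<bar>(\<Sum>i<n. U i \<omega>)/real n - mu\<bar>"
          using big no1 mv_bd unfolding dec by linarith
      qed
      have "prob {\<omega>\<in>space M. a \<le> \<bar>(\<Sum>i<n. X i \<omega>)/real n - expectation (X 0)\<bar>}
          \<le> prob ({\<omega>\<in>space M. a/3 \<le> \<bar>(\<Sum>i<n. U i \<omega>)/real n - mu\<bar>} \<union> {\<omega>\<in>space M. a/3 \<le> (\<Sum>i<n. \<bar>V i \<omega>\<bar>)/real n})"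
        by (rule finite_measure_mono[OF sub]) measurable
      also have "\<dots> \<le> prob {\<omega>\<in>space M. a/3 \<le> \<bar>(\<Sum>i<n. U i \<omega>)/real n - mu\<bar>} + prob {\<omega>\<in>space M. a/3 \<le> (\<Sum>i<n. \<bar>V i \<omega>\<bar>)/real n}"
        by (rule measure_Un_le) measurable
      also have "\<dots> \<le> 36*K^2/(real n * a^2) + 3*\<eta>/a"
        using cheb[OF n] markov[OF n] by simp
      also have "36*K^2/(real n * a^2) \<le> 36*K^2/(real no * a^2)"
        using nn no a by (intro divide_left_mono mult_right_mono) auto
      also have "3*\<eta>/a \<le> 3*r/8" using a \<eta>_def by (simp add: field_simps)
      finally have "prob {\<omega>\<in>space M. a \<le> \<bar>(\<Sum>i<n. X i \<omega>)/real n - expectation (X 0)\<bar>}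
         \<le> 36*K^2/(real no * a^2) + 3*r/8" by simp
      then show "norm (prob {\<omega>\<in>space M. a \<le> \<bar>(\<Sum>i<n. X i \<omega>)/real n - expectation (X 0)\<bar>} - 0) < r"
        using no(2) r by simp
    qed
  qed
qed


lemma wlln_count:
  fixes Y :: "nat \<Rightarrow> 'w \<Rightarrow> 'b" and h :: "'b \<Rightarrow> real"
  assumes P: "prob_space M" and ind: "prob_space.indep_vars M (\<lambda>_. count_space UNIV) Y UNIV"
    and law: "\<And>i. distr M (count_space UNIV) (Y i) = \<mu>" and hi: "integrable \<mu> h" and a: "a > 0"
  shows "(\<lambda>n. measure M {\<omega>\<in>space M. a \<le> \<bar>(\<Sum>i<n. h (Y i \<omega>))/real n - integral\<^sup>L \<mu> h\<bar>}) \<longlonglongrightarrow> 0"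
proof -
  interpret prob_space M by (rule P)
  have measY[measurable]: "Y i \<in> measurable M (count_space UNIV)" for i
    using ind unfolding indep_vars_def by auto
  have hm[measurable]: "h \<in> borel_measurable (count_space UNIV)" by simp
  define X where "X i \<omega> = h (Y i \<omega>)" for i \<omega>
  have indX: "indep_vars (\<lambda>_. borel) X UNIV"
    unfolding X_def[abs_def] by (rule indep_vars_compose2[OF ind]) simp
  have dX: "distr M borel (X i) = distr \<mu> borel h" for i
  proof -
    have "distr M borel (X i) = distr (distr M (count_space UNIV) (Y i)) borel h"
      unfolding X_def[abs_def] by (subst distr_distr) (auto simp: comp_def)
    then show ?thesis using law by simp
  qed
  have iX: "integrable M (X 0)"
    using hi law[of 0] integrable_distr_eq[of "Y 0" M "count_space UNIV" h] unfolding X_def[abs_def] by simp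
  have eX: "expectation (\<lambda>\<omega>. h (Y 0 \<omega>)) = integral\<^sup>L \<mu> h"
    using law[of 0] integral_distr[of "Y 0" M "count_space UNIV" h] by simp
  show ?thesis
    using wlln_real[OF indX _ iX a] dX eX unfolding X_def[abs_def] by simp
qed


definition Aelbo :: "real^'m \<Rightarrow> real^'p \<Rightarrow> (real^'p^'m) \<times> (real^'p^'p) \<Rightarrow> (real^'p) \<times> (real^'p) \<Rightarrow> real" where
  "Aelbo x off \<theta> \<psi> = - (\<Sum>j\<in>UNIV. exp (off$j + xB x (fst \<theta>) j + fst \<psi>$j + (snd \<psi>$j)\<^sup>2 / 2))
       + ln (det (snd \<theta>)) / 2 - (fst \<psi> \<bullet> (snd \<theta> *v fst \<psi>)) / 2
       - (\<Sum>j\<in>UNIV. snd \<theta>$j$j * (snd \<psi>$j)\<^sup>2) / 2"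

lemma elbo_split:
  fixes x :: "real^'m::finite" and off :: "real^'p::finite" and y :: "nat^'p"
    and \<theta> :: "(real^'p^'m) \<times> (real^'p^'p)" and \<psi> :: "(real^'p) \<times> (real^'p)"
  shows "elbo x off y \<theta> \<psi> =
   (\<Sum>j\<in>UNIV. real (y$j) * (off$j + fst \<psi>$j + xB x (fst \<theta>) j)) - (\<Sum>j\<in>UNIV. ln (fact (y$j)))
   + Aelbo x off \<theta> \<psi> + (\<Sum>j\<in>UNIV. ln (snd \<psi> $ j)) + real CARD('p) / 2"
  unfolding elbo_def Aelbo_def Let_def by simp

lemma det_nz: assumes "sym_posdef (\<Omega>::real^'p::finite^'p)" shows "det \<Omega> \<noteq> 0"
proof -
  have "inj ((*v) \<Omega>)"
  proof (rule injI)
    fix u v assume "\<Omega> *v u = \<Omega> *v v"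
    then have "\<Omega> *v (u - v) = 0" by (simp add: matrix_vector_mult_diff_distrib)
    then show "u = v" using assms unfolding sym_posdef_def by (metis inner_zero_right less_irrefl eq_iff_diff_eq_0)
  qed
  then show ?thesis using det_nz_iff_inj[of "(*v) \<Omega>"] by (simp add: matrix_vector_mul_linear)
qed

lemma cont_det: "continuous_on S (\<lambda>z. det (f z :: real^'n::finite^'n))" if "continuous_on S f"
  unfolding det_def using that by (intro continuous_intros)

lemma cont_xB: "continuous_on S (\<lambda>z. xB x (f z) j)" if "continuous_on S f"
  unfolding xB_def using that by (intro continuous_intros)

lemma quad_eq: "(m::real^'p::finite) \<bullet> (A *v m) = (\<Sum>i\<in>UNIV. \<Sum>j\<in>UNIV. m$i * (A$i$j * m$j))"
  by (simp add: inner_vec_def matrix_vector_mult_def sum_distrib_left)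

lemma cont_A: assumes "\<forall>z\<in>S. sym_posdef (snd (fst z))"
  shows "continuous_on S (\<lambda>z. Aelbo x off (fst z) (snd z))"
  unfolding Aelbo_def quad_eq
  apply (intro continuous_intros cont_xB cont_det)
  using assms det_nz by auto


lemma ln_fact_lower:
  assumes "A \<ge> 0" shows "\<exists>K. \<forall>k::nat. A * real k - K \<le> ln (fact k)"
proof -
  obtain N :: nat where N: "exp A \<le> real N" using real_arch_simple by blast
  have "A * real k - A * real N \<le> ln (fact k)" for k
  proof (induction k)
    case 0 then show ?case using assms by simp
  next
    case (Suc k)
    have fpos: "(0::real) < fact k" by simp
    have "ln (fact (Suc k) :: real) = ln (real (Suc k) * fact k)" by (simp only: fact_Suc)
    also have "\<dots> = ln (real (Suc k)) + ln (fact k)" by (rule ln_mult_pos) (use fpos in auto)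
    finally have eq: "ln (fact (Suc k) :: real) = ln (real (Suc k)) + ln (fact k)" .
    have l1: "0 \<le> ln (real (Suc k))" by (rule ln_ge_zero) simp
    have l2: "0 \<le> ln (fact k :: real)" by (rule ln_ge_zero) (rule fact_ge_1)
    have "A * real (Suc k) - A * real N \<le> ln (real (Suc k)) + ln (fact k)"
    proof (cases "Suc k \<ge> N")
      case True
      then have "exp A \<le> real (Suc k)" using N by linarith
      then have "ln (exp A) \<le> ln (real (Suc k))" by (subst ln_le_cancel_iff) auto
      then have "A \<le> ln (real (Suc k))" by (simp only: ln_exp)
      then show ?thesis using Suc.IH by (simp add: algebra_simps)
    next
      case False
      have "A * real (Suc k) \<le> A * real N" using False assms by (intro mult_left_mono) auto
      then show ?thesis using l1 l2 by linarith
    qed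
    then show ?case using eq by simp
  qed
  then show ?thesis by blast
qed



definition Sy :: "nat^'p \<Rightarrow> real" where "Sy y = (\<Sum>j\<in>UNIV. real (y$j))"
definition cy :: "nat^'p \<Rightarrow> real" where "cy y = (\<Sum>j\<in>UNIV. ln (fact (y$j)))"
definition gy :: "nat^'p \<Rightarrow> real" where "gy y = 1 + Sy y"


lemma Sy_nonneg: "Sy y \<ge> 0" unfolding Sy_def by (simp add: sum_nonneg)
lemma gy_pos: "gy y > 0" unfolding gy_def using Sy_nonneg[of y] by linarith

lemma sup_diff:
  fixes F G :: "'a \<Rightarrow> real"
  assumes "A \<noteq> {}" "bdd_above (F ` A)" "bdd_above (G ` A)" "\<And>a. a \<in> A \<Longrightarrow> \<bar>F a - G a\<bar> \<le> D"
  shows "\<bar>(SUP a\<in>A. F a) - (SUP a\<in>A. G a)\<bar> \<le> D"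
proof -
  have "(SUP a\<in>A. F a) \<le> (SUP a\<in>A. G a) + D"
  proof (rule cSUP_least[OF assms(1)])
    fix a assume a: "a \<in> A"
    have "G a \<le> (SUP a\<in>A. G a)" by (rule cSUP_upper[OF a assms(3)])
    then show "F a \<le> (SUP a\<in>A. G a) + D" using assms(4)[OF a] by linarith
  qed
  moreover have "(SUP a\<in>A. G a) \<le> (SUP a\<in>A. F a) + D"
  proof (rule cSUP_least[OF assms(1)])
    fix a assume a: "a \<in> A"
    have "F a \<le> (SUP a\<in>A. F a)" by (rule cSUP_upper[OF a assms(2)])
    then show "G a \<le> (SUP a\<in>A. F a) + D" using assms(4)[OF a] by linarith
  qed
  ultimately show ?thesis by linarith
qed


context
  fixes \<Theta> :: "((real^'p::finite^'m::finite) \<times> (real^'p^'p)) set"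
    and \<Psi> :: "((real^'p) \<times> (real^'p)) set"
    and x :: "real^'m" and off :: "real^'p"
  assumes Th: "\<Theta> \<subseteq> {\<theta>. sym_posdef (snd \<theta>)}" and cT: "compact \<Theta>"
    and Ps: "\<Psi> \<subseteq> {\<psi>. \<forall>j. snd \<psi> $ j > 0}" and Pne: "\<Psi> \<noteq> {}" and bP: "bounded \<Psi>"
begin

lemma cS: "compact (\<Theta> \<times> closure \<Psi>)" using cT bP by (intro compact_Times) auto

lemma contA_S: "continuous_on (\<Theta> \<times> closure \<Psi>) (\<lambda>z. Aelbo x off (fst z) (snd z))"
  using Th by (intro cont_A) auto

lemma A_bound: "\<exists>Ab. \<forall>\<theta>\<in>\<Theta>. \<forall>\<psi>\<in>\<Psi>. \<bar>Aelbo x off \<theta> \<psi>\<bar> \<le> Ab"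
proof -
  let ?f = "\<lambda>z. Aelbo x off (fst z) (snd z)"
  have "compact (?f ` (\<Theta> \<times> closure \<Psi>))"
    by (rule compact_continuous_image[OF contA_S cS])
  then have "bounded (?f ` (\<Theta> \<times> closure \<Psi>))" by (rule compact_imp_bounded)
  then obtain b where b: "\<forall>v\<in>?f ` (\<Theta> \<times> closure \<Psi>). norm v \<le> b"
    unfolding bounded_iff by blast
  show ?thesis
  proof (intro exI[of _ b] ballI)
    fix \<theta> \<psi> assume "\<theta> \<in> \<Theta>" "\<psi> \<in> \<Psi>"
    then have "(\<theta>, \<psi>) \<in> \<Theta> \<times> closure \<Psi>" using closure_subset[of \<Psi>] by blast
    then have "?f (\<theta>, \<psi>) \<in> ?f ` (\<Theta> \<times> closure \<Psi>)" by (rule imageI)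
    then have "norm (?f (\<theta>, \<psi>)) \<le> b" using b by blast
    then show "\<bar>Aelbo x off \<theta> \<psi>\<bar> \<le> b" by simp
  qed
qed

definition XB :: "(real^'p^'m) \<times> (real^'p^'p) \<Rightarrow> real^'p" where
  "XB \<theta> = (\<chi> j. xB x (fst \<theta>) j)"

lemma contXB: "continuous_on \<Theta> XB"
  unfolding XB_def by (intro continuous_intros cont_xB)

lemma X_bound: "\<exists>Xb. \<forall>\<theta>\<in>\<Theta>. \<forall>j. \<bar>xB x (fst \<theta>) j\<bar> \<le> Xb"
proof -
  have "compact (XB ` \<Theta>)" by (rule compact_continuous_image[OF contXB cT])
  then have "bounded (XB ` \<Theta>)" by (rule compact_imp_bounded)
  then obtain b where b: "\<forall>v\<in>XB ` \<Theta>. norm v \<le> b" unfolding bounded_iff by blast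
  show ?thesis
  proof (intro exI[of _ b] ballI allI)
    fix \<theta> j assume "\<theta> \<in> \<Theta>"
    then have "norm (XB \<theta>) \<le> b" using b by blast
    then have "\<bar>XB \<theta> $ j\<bar> \<le> b" using component_le_norm_cart[of "XB \<theta>" j] by linarith
    then show "\<bar>xB x (fst \<theta>) j\<bar> \<le> b" by (simp add: XB_def)
  qed
qed

lemma R_bound: "\<exists>R. \<forall>\<psi>\<in>\<Psi>. \<forall>j. \<bar>fst \<psi> $ j\<bar> \<le> R \<and> \<bar>snd \<psi> $ j\<bar> \<le> R"
proof -
  obtain b where b: "\<forall>v\<in>\<Psi>. norm v \<le> b" using bP unfolding bounded_iff by blast
  have "\<bar>fst \<psi> $ j\<bar> \<le> b \<and> \<bar>snd \<psi> $ j\<bar> \<le> b" if p: "\<psi> \<in> \<Psi>" for \<psi> j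
  proof -
    have nb: "norm \<psi> \<le> b" using b p by blast
    have "\<bar>fst \<psi> $ j\<bar> \<le> norm (fst \<psi>)" by (rule component_le_norm_cart)
    moreover have "norm (fst \<psi>) \<le> norm \<psi>" using norm_fst_le[of "fst \<psi>" "snd \<psi>"] by simp
    moreover have "\<bar>snd \<psi> $ j\<bar> \<le> norm (snd \<psi>)" by (rule component_le_norm_cart)
    moreover have "norm (snd \<psi>) \<le> norm \<psi>" using norm_snd_le[of "snd \<psi>" "fst \<psi>"] by simp
    ultimately show ?thesis using nb by linarith
  qed
  then show ?thesis by blast
qed

lemma modulus: "\<exists>d>0. \<forall>\<theta>\<in>\<Theta>. \<forall>\<theta>'\<in>\<Theta>. dist \<theta> \<theta>' < d \<longrightarrow>
    (\<forall>\<psi>\<in>\<Psi>. \<bar>Aelbo x off \<theta> \<psi> - Aelbo x off \<theta>' \<psi>\<bar> \<le> e) \<and> (\<forall>j. \<bar>xB x (fst \<theta>) j - xB x (fst \<theta>') j\<bar> \<le> e)"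
  if e: "e > 0"
proof -
  have "uniformly_continuous_on (\<Theta> \<times> closure \<Psi>) (\<lambda>z. Aelbo x off (fst z) (snd z))"
    by (rule compact_uniformly_continuous[OF contA_S cS])
  then obtain d1 where d1: "d1 > 0" and
    h1': "\<forall>z\<in>\<Theta> \<times> closure \<Psi>. \<forall>z'\<in>\<Theta> \<times> closure \<Psi>. dist z' z < d1 \<longrightarrow>
      dist (Aelbo x off (fst z') (snd z')) (Aelbo x off (fst z) (snd z)) < e"
    unfolding uniformly_continuous_on_def using e by blast
  have h1: "\<And>z z'. z \<in> \<Theta> \<times> closure \<Psi> \<Longrightarrow> z' \<in> \<Theta> \<times> closure \<Psi> \<Longrightarrow> dist z' z < d1 \<Longrightarrow>
      dist (Aelbo x off (fst z') (snd z')) (Aelbo x off (fst z) (snd z)) < e"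
    using h1' by blast
  have "uniformly_continuous_on \<Theta> XB" by (rule compact_uniformly_continuous[OF contXB cT])
  then obtain d2 where d2: "d2 > 0" and
    h2': "\<forall>z\<in>\<Theta>. \<forall>z'\<in>\<Theta>. dist z' z < d2 \<longrightarrow> dist (XB z') (XB z) < e"
    unfolding uniformly_continuous_on_def using e by blast
  have h2: "\<And>z z'. z \<in> \<Theta> \<Longrightarrow> z' \<in> \<Theta> \<Longrightarrow> dist z' z < d2 \<Longrightarrow> dist (XB z') (XB z) < e"
    using h2' by blast
  show ?thesis
  proof (intro exI[of _ "min d1 d2"] conjI ballI impI allI)
    show "min d1 d2 > 0" using d1 d2 by simp
    fix \<theta> \<theta>' assume t: "\<theta> \<in> \<Theta>" "\<theta>' \<in> \<Theta>" and dd: "dist \<theta> \<theta>' < min d1 d2"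
    {
      fix \<psi> assume p: "\<psi> \<in> \<Psi>"
      have "dist (Aelbo x off (fst (\<theta>,\<psi>)) (snd (\<theta>,\<psi>))) (Aelbo x off (fst (\<theta>',\<psi>)) (snd (\<theta>',\<psi>))) < e"
        using t p closure_subset[of \<Psi>] dd by (intro h1) (auto simp: dist_Pair_Pair)
      then show "\<bar>Aelbo x off \<theta> \<psi> - Aelbo x off \<theta>' \<psi>\<bar> \<le> e" by (simp add: dist_real_def)
    }
    fix j
    have "dist (XB \<theta>) (XB \<theta>') < e" using t dd by (intro h2) auto
    then have "dist (XB \<theta> $ j) (XB \<theta>' $ j) < e" using dist_vec_nth_le order_le_less_trans by blast
    then show "\<bar>xB x (fst \<theta>) j - xB x (fst \<theta>') j\<bar> \<le> e" by (simp add: XB_def dist_real_def)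
  qed
qed

lemma elbo_upper: "\<exists>a0 Kup. a0 \<ge> 0 \<and> (\<forall>\<theta>\<in>\<Theta>. \<forall>\<psi>\<in>\<Psi>. \<forall>y.
    elbo x off y \<theta> \<psi> \<le> a0 * Sy y + Kup - cy y)"
proof -
  obtain Ab where Ab: "\<forall>\<theta>\<in>\<Theta>. \<forall>\<psi>\<in>\<Psi>. \<bar>Aelbo x off \<theta> \<psi>\<bar> \<le> Ab" using A_bound by blast
  obtain Xb where Xb: "\<forall>\<theta>\<in>\<Theta>. \<forall>j. \<bar>xB x (fst \<theta>) j\<bar> \<le> Xb" using X_bound by blast
  obtain R where R: "\<forall>\<psi>\<in>\<Psi>. \<forall>j. \<bar>fst \<psi> $ j\<bar> \<le> R \<and> \<bar>snd \<psi> $ j\<bar> \<le> R" using R_bound by blast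
  obtain \<psi>0 where "\<psi>0 \<in> \<Psi>" using Pne by blast
  then have R0: "R \<ge> 0" using R by (meson abs_ge_zero order_trans)
  define a0 where "a0 = (\<Sum>j\<in>UNIV. \<bar>off$j\<bar>) + R + \<bar>Xb\<bar>"
  define Kup where "Kup = Ab + real CARD('p) * R + real CARD('p) / 2"
  have a0: "a0 \<ge> 0" unfolding a0_def using R0 by (simp add: sum_nonneg)
  have "elbo x off y \<theta> \<psi> \<le> a0 * Sy y + Kup - cy y" if t: "\<theta> \<in> \<Theta>" and p: "\<psi> \<in> \<Psi>" for \<theta> \<psi> y
  proof -
    have 1: "(\<Sum>j\<in>UNIV. real (y$j) * (off$j + fst \<psi>$j + xB x (fst \<theta>) j)) \<le> a0 * Sy y"
      unfolding Sy_def sum_distrib_left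
    proof (rule sum_mono)
      fix j
      have "off$j \<le> (\<Sum>j\<in>UNIV. \<bar>off$j\<bar>)"
        by (rule order_trans[OF abs_ge_self]) (rule member_le_sum[where f="\<lambda>j. \<bar>off$j\<bar>"], auto)
      moreover have "fst \<psi>$j \<le> R" using R p by (meson abs_le_D1)
      moreover have "xB x (fst \<theta>) j \<le> \<bar>Xb\<bar>" using Xb t by (meson abs_le_D1 abs_ge_self order_trans)
      ultimately have "off$j + fst \<psi>$j + xB x (fst \<theta>) j \<le> a0" unfolding a0_def by linarith
      then have "real (y$j) * (off$j + fst \<psi>$j + xB x (fst \<theta>) j) \<le> real (y$j) * a0"
        by (rule mult_left_mono) simp
      then show "real (y$j) * (off$j + fst \<psi>$j + xB x (fst \<theta>) j) \<le> a0 * real (y$j)"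
        by (simp add: mult.commute)
    qed
    have 2: "(\<Sum>j\<in>UNIV. ln (snd \<psi> $ j)) \<le> real CARD('p) * R"
    proof -
      have "(\<Sum>j\<in>UNIV. ln (snd \<psi> $ j)) \<le> (\<Sum>j\<in>(UNIV::'p set). R)"
      proof (rule sum_mono)
        fix j
        have pos: "snd \<psi> $ j > 0" using Ps p by auto
        have "ln (snd \<psi> $ j) \<le> snd \<psi> $ j - 1" by (rule ln_le_minus_one[OF pos])
        also have "\<dots> \<le> R"
        proof -
          have "snd \<psi> $ j \<le> R" using R p abs_le_D1 by blast
          then show ?thesis by linarith
        qed
        finally show "ln (snd \<psi> $ j) \<le> R" .
      qed
      then show ?thesis by simp
    qed
    have 3: "Aelbo x off \<theta> \<psi> \<le> Ab" using Ab t p by (meson abs_le_D1)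
    show ?thesis unfolding elbo_split cy_def Kup_def using 1 2 3 by linarith
  qed
  then show ?thesis using a0 by blast
qed

lemma elbo_bdd: assumes t: "\<theta> \<in> \<Theta>" shows "bdd_above ((\<lambda>\<psi>. elbo x off y \<theta> \<psi>) ` \<Psi>)"
proof -
  obtain a0 Kup where h: "\<forall>\<theta>\<in>\<Theta>. \<forall>\<psi>\<in>\<Psi>. \<forall>y. elbo x off y \<theta> \<psi> \<le> a0 * Sy y + Kup - cy y"
    using elbo_upper by blast
  show ?thesis by (rule bdd_aboveI2[where M="a0 * Sy y + Kup - cy y"]) (use h t in blast)
qed

lemma L_upper: "\<exists>a0 Kup. a0 \<ge> 0 \<and> (\<forall>\<theta>\<in>\<Theta>. \<forall>y. profiled \<Psi> x off \<theta> y \<le> a0 * Sy y + Kup - cy y)"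
proof -
  obtain a0 Kup where a0: "a0 \<ge> 0" and h: "\<forall>\<theta>\<in>\<Theta>. \<forall>\<psi>\<in>\<Psi>. \<forall>y. elbo x off y \<theta> \<psi> \<le> a0 * Sy y + Kup - cy y"
    using elbo_upper by blast
  have "profiled \<Psi> x off \<theta> y \<le> a0 * Sy y + Kup - cy y" if "\<theta> \<in> \<Theta>" for \<theta> y
    unfolding profiled_def using h that Pne by (intro cSUP_least) auto
  then show ?thesis using a0 by blast
qed

lemma L_diff:
  assumes t: "\<theta> \<in> \<Theta>" "\<theta>' \<in> \<Theta>" and e: "e \<ge> 0"
    and hA: "\<forall>\<psi>\<in>\<Psi>. \<bar>Aelbo x off \<theta> \<psi> - Aelbo x off \<theta>' \<psi>\<bar> \<le> e"
    and hX: "\<forall>j. \<bar>xB x (fst \<theta>) j - xB x (fst \<theta>') j\<bar> \<le> e"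
  shows "\<bar>profiled \<Psi> x off \<theta> y - profiled \<Psi> x off \<theta>' y\<bar> \<le> e * gy y"
  unfolding profiled_def
proof (rule sup_diff[OF Pne elbo_bdd[OF t(1)] elbo_bdd[OF t(2)]])
  fix \<psi> assume p: "\<psi> \<in> \<Psi>"
  have eq: "elbo x off y \<theta> \<psi> - elbo x off y \<theta>' \<psi>
      = (\<Sum>j\<in>UNIV. real (y$j) * (xB x (fst \<theta>) j - xB x (fst \<theta>') j)) + (Aelbo x off \<theta> \<psi> - Aelbo x off \<theta>' \<psi>)"
    unfolding elbo_split by (simp add: sum_subtractf[symmetric] algebra_simps)
  have "\<bar>\<Sum>j\<in>UNIV. real (y$j) * (xB x (fst \<theta>) j - xB x (fst \<theta>') j)\<bar> \<le> (\<Sum>j\<in>UNIV. real (y$j) * e)"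
  proof -
    have "\<bar>\<Sum>j\<in>UNIV. real (y$j) * (xB x (fst \<theta>) j - xB x (fst \<theta>') j)\<bar>
        \<le> (\<Sum>j\<in>UNIV. \<bar>real (y$j) * (xB x (fst \<theta>) j - xB x (fst \<theta>') j)\<bar>)" by (rule sum_abs)
    also have "\<dots> \<le> (\<Sum>j\<in>UNIV. real (y$j) * e)"
      using hX by (intro sum_mono) (simp add: abs_mult mult_left_mono)
    finally show ?thesis .
  qed
  moreover have "(\<Sum>j\<in>UNIV. real (y$j) * e) = e * Sy y"
    unfolding Sy_def sum_distrib_left by (simp add: mult.commute)
  moreover have "\<bar>Aelbo x off \<theta> \<psi> - Aelbo x off \<theta>' \<psi>\<bar> \<le> e" using hA p by blast
  moreover have "\<bar>(\<Sum>j\<in>UNIV. real (y$j) * (xB x (fst \<theta>) j - xB x (fst \<theta>') j)) + (Aelbo x off \<theta> \<psi> - Aelbo x off \<theta>' \<psi>)\<bar>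
     \<le> \<bar>\<Sum>j\<in>UNIV. real (y$j) * (xB x (fst \<theta>) j - xB x (fst \<theta>') j)\<bar> + \<bar>Aelbo x off \<theta> \<psi> - Aelbo x off \<theta>' \<psi>\<bar>"
    by (rule abs_triangle_ineq)
  ultimately have "\<bar>elbo x off y \<theta> \<psi> - elbo x off y \<theta>' \<psi>\<bar> \<le> e * Sy y + e"
    unfolding eq by linarith
  then show "\<bar>elbo x off y \<theta> \<psi> - elbo x off y \<theta>' \<psi>\<bar> \<le> e * gy y" by (simp add: gy_def algebra_simps)
qed

lemma L_glob: "\<exists>C. \<forall>\<theta>\<in>\<Theta>. \<forall>\<theta>'\<in>\<Theta>. \<forall>y. \<bar>profiled \<Psi> x off \<theta> y - profiled \<Psi> x off \<theta>' y\<bar> \<le> C * gy y"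
proof -
  obtain Ab where Ab: "\<forall>\<theta>\<in>\<Theta>. \<forall>\<psi>\<in>\<Psi>. \<bar>Aelbo x off \<theta> \<psi>\<bar> \<le> Ab" using A_bound by blast
  obtain Xb where Xb: "\<forall>\<theta>\<in>\<Theta>. \<forall>j. \<bar>xB x (fst \<theta>) j\<bar> \<le> Xb" using X_bound by blast
  define C where "C = 2 * \<bar>Ab\<bar> + 2 * \<bar>Xb\<bar>"
  have "\<bar>profiled \<Psi> x off \<theta> y - profiled \<Psi> x off \<theta>' y\<bar> \<le> C * gy y"
    if t: "\<theta> \<in> \<Theta>" "\<theta>' \<in> \<Theta>" for \<theta> \<theta>' y
  proof (rule L_diff[OF t])
    show "C \<ge> 0" unfolding C_def by simp
    show "\<forall>\<psi>\<in>\<Psi>. \<bar>Aelbo x off \<theta> \<psi> - Aelbo x off \<theta>' \<psi>\<bar> \<le> C"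
    proof
      fix \<psi> assume p: "\<psi> \<in> \<Psi>"
      have "\<bar>Aelbo x off \<theta> \<psi> - Aelbo x off \<theta>' \<psi>\<bar> \<le> \<bar>Aelbo x off \<theta> \<psi>\<bar> + \<bar>Aelbo x off \<theta>' \<psi>\<bar>"
        by (rule abs_triangle_ineq4)
      moreover have "\<bar>Aelbo x off \<theta> \<psi>\<bar> \<le> Ab" "\<bar>Aelbo x off \<theta>' \<psi>\<bar> \<le> Ab" using Ab t p by auto
      moreover have "Ab \<le> \<bar>Ab\<bar>" "0 \<le> \<bar>Xb\<bar>" by auto
      ultimately show "\<bar>Aelbo x off \<theta> \<psi> - Aelbo x off \<theta>' \<psi>\<bar> \<le> C" unfolding C_def by linarith
    qed
    show "\<forall>j. \<bar>xB x (fst \<theta>) j - xB x (fst \<theta>') j\<bar> \<le> C"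
    proof
      fix j
      have "\<bar>xB x (fst \<theta>) j - xB x (fst \<theta>') j\<bar> \<le> \<bar>xB x (fst \<theta>) j\<bar> + \<bar>xB x (fst \<theta>') j\<bar>"
        by (rule abs_triangle_ineq4)
      moreover have "\<bar>xB x (fst \<theta>) j\<bar> \<le> Xb" "\<bar>xB x (fst \<theta>') j\<bar> \<le> Xb" using Xb t by auto
      moreover have "Xb \<le> \<bar>Xb\<bar>" "0 \<le> \<bar>Ab\<bar>" by auto
      ultimately show "\<bar>xB x (fst \<theta>) j - xB x (fst \<theta>') j\<bar> \<le> C" unfolding C_def by linarith
    qed
  qed
  then show ?thesis by blast
qed

lemma L_mod: assumes e: "e > 0"
  shows "\<exists>d>0. \<forall>\<theta>\<in>\<Theta>. \<forall>\<theta>'\<in>\<Theta>. dist \<theta> \<theta>' < d \<longrightarrow>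
     (\<forall>y. \<bar>profiled \<Psi> x off \<theta> y - profiled \<Psi> x off \<theta>' y\<bar> \<le> e * gy y)"
proof -
  obtain d where d: "d > 0" and h: "\<forall>\<theta>\<in>\<Theta>. \<forall>\<theta>'\<in>\<Theta>. dist \<theta> \<theta>' < d \<longrightarrow>
    (\<forall>\<psi>\<in>\<Psi>. \<bar>Aelbo x off \<theta> \<psi> - Aelbo x off \<theta>' \<psi>\<bar> \<le> e) \<and> (\<forall>j. \<bar>xB x (fst \<theta>) j - xB x (fst \<theta>') j\<bar> \<le> e)"
    using modulus[OF e] by blast
  show ?thesis using d h e by (intro exI[of _ d]) (auto intro!: L_diff)
qed

lemma g_dom: assumes t0: "\<theta>0 \<in> \<Theta>" shows "\<exists>K. \<forall>y. gy y \<le> K + \<bar>profiled \<Psi> x off \<theta>0 y\<bar>"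
proof -
  obtain a0 Kup where a0: "a0 \<ge> 0" and h: "\<forall>\<theta>\<in>\<Theta>. \<forall>y. profiled \<Psi> x off \<theta> y \<le> a0 * Sy y + Kup - cy y"
    using L_upper by blast
  obtain K1 where K1: "\<forall>k::nat. (a0 + 1) * real k - K1 \<le> ln (fact k)"
    using ln_fact_lower[of "a0 + 1"] a0 by auto
  have c: "(a0 + 1) * Sy y - real CARD('p) * K1 \<le> cy y" for y :: "nat^'p"
  proof -
    have "(\<Sum>j\<in>(UNIV::'p set). (a0 + 1) * real (y$j) - K1) \<le> cy y"
      unfolding cy_def by (rule sum_mono) (use K1 in auto)
    then show ?thesis by (simp add: Sy_def sum_subtractf sum_distrib_left)
  qed
  have "gy y \<le> (1 + Kup + real CARD('p) * K1) + \<bar>profiled \<Psi> x off \<theta>0 y\<bar>" for y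
  proof -
    have "(a0 + 1) * Sy y = a0 * Sy y + Sy y" by (simp add: distrib_right)
    moreover have "profiled \<Psi> x off \<theta>0 y \<le> a0 * Sy y + Kup - cy y" using h t0 by blast
    moreover have "- profiled \<Psi> x off \<theta>0 y \<le> \<bar>profiled \<Psi> x off \<theta>0 y\<bar>" by simp
    ultimately show ?thesis using c[of y] unfolding gy_def by linarith
  qed
  then show ?thesis by blast
qed

end


theorem theorem1:
  fixes \<Theta> :: "((real^'p::finite^'m::finite) \<times> (real^'p^'p)) set"
    and \<Psi> :: "((real^'p) \<times> (real^'p)) set"
    and x :: "real^'m" and off :: "real^'p"
    and \<theta>star \<theta>bar :: "(real^'p^'m) \<times> (real^'p^'p)"
    and M :: "'w measure"
    and Y :: "nat \<Rightarrow> 'w \<Rightarrow> nat^'p"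
    and \<theta>hat :: "nat \<Rightarrow> 'w \<Rightarrow> (real^'p^'m) \<times> (real^'p^'p)"
  assumes Theta_params: "\<Theta> \<subseteq> {\<theta>. sym_posdef (snd \<theta>)}"
    and A1: "compact \<Theta>"
    and Psi_sub: "\<Psi> \<subseteq> {\<psi>. \<forall>j. snd \<psi> $ j > 0}"
    and Psi_ne: "\<Psi> \<noteq> {}"
    and A2: "bounded \<Psi>"
    and star_in: "\<theta>star \<in> \<Theta>"
    and P: "prob_space M"
    and indep: "prob_space.indep_vars M (\<lambda>_. count_space UNIV) Y UNIV"
    and law: "\<And>i. distr M (count_space UNIV) (Y i) = pln_measure \<theta>star x off"
    and bar_in: "\<theta>bar \<in> \<Theta>"
    and bar_max: "\<And>\<theta>. \<theta> \<in> \<Theta> \<Longrightarrow> \<theta> \<noteq> \<theta>bar \<Longrightarrow>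
        (\<integral>y. profiled \<Psi> x off \<theta> y \<partial>pln_measure \<theta>star x off)
          < (\<integral>y. profiled \<Psi> x off \<theta>bar y \<partial>pln_measure \<theta>star x off)"
    and hat_meas: "\<And>n. \<theta>hat n \<in> borel_measurable M"
    and hat_in: "\<And>n \<omega>. n \<ge> 1 \<Longrightarrow> \<omega> \<in> space M \<Longrightarrow> \<theta>hat n \<omega> \<in> \<Theta>"
    and hat_max: "\<And>n \<omega> \<theta>. n \<ge> 1 \<Longrightarrow> \<omega> \<in> space M \<Longrightarrow> \<theta> \<in> \<Theta> \<Longrightarrow>
        (\<Sum>i<n. profiled \<Psi> x off \<theta> (Y i \<omega>)) / real n
          \<le> (\<Sum>i<n. profiled \<Psi> x off (\<theta>hat n \<omega>) (Y i \<omega>)) / real n"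
  shows "\<And>\<epsilon>. \<epsilon> > 0 \<Longrightarrow>
     (\<lambda>n. measure M {\<omega> \<in> space M. dist (\<theta>hat n \<omega>) \<theta>bar > \<epsilon>}) \<longlonglongrightarrow> 0"
proof -
  fix \<epsilon> :: real assume \<epsilon>: "\<epsilon> > 0"
  interpret prob_space M by (rule P)
  note ctx = Theta_params A1 Psi_sub Psi_ne A2
  define \<mu> where "\<mu> = pln_measure \<theta>star x off"
  define f where "f \<theta> y = profiled \<Psi> x off \<theta> y" for \<theta> y
  define Mf where "Mf \<theta> = (\<integral>y. f \<theta> y \<partial>\<mu>)" for \<theta>
  define K\<epsilon> where "K\<epsilon> = {\<theta>\<in>\<Theta>. \<epsilon> \<le> dist \<theta> \<theta>bar}"
  define E where "E n = {\<omega> \<in> space M. dist (\<theta>hat n \<omega>) \<theta>bar > \<epsilon>}" for n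
  have measY[measurable]: "Y i \<in> measurable M (count_space UNIV)" for i
    using indep unfolding indep_vars_def by auto
  have law': "distr M (count_space UNIV) (Y i) = \<mu>" for i using law \<mu>_def by simp
  have sets\<mu>: "sets \<mu> = sets (count_space UNIV)" by (simp add: \<mu>_def pln_measure_def)
  have meas_any[measurable]: "h \<in> borel_measurable \<mu>" for h :: "nat^'p \<Rightarrow> real"
    by (subst measurable_cong_sets[OF sets\<mu> refl]) simp
  have prob\<mu>: "prob_space \<mu>" unfolding law'[of 0, symmetric] by (rule prob_space_distr) simp
  have E_meas: "E n \<in> sets M" for n
    unfolding E_def using hat_meas[of n] by measurable
  show "(\<lambda>n. measure M {\<omega> \<in> space M. dist (\<theta>hat n \<omega>) \<theta>bar > \<epsilon>}) \<longlonglongrightarrow> 0"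
  proof (cases "K\<epsilon> = {}")
    case True
    have "E n = {}" if "n \<ge> 1" for n
      using hat_in[OF that] True unfolding E_def K\<epsilon>_def by fastforce
    then have "eventually (\<lambda>n. measure M (E n) = 0) sequentially"
      unfolding eventually_sequentially by (intro exI[of _ 1]) auto
    then have "(\<lambda>n. measure M (E n)) \<longlonglongrightarrow> 0" by (rule tendsto_eventually)
    then show ?thesis by (simp add: E_def)
  next
    case False
    then obtain \<theta>1 where t1: "\<theta>1 \<in> K\<epsilon>" by blast
    then have t1\<Theta>: "\<theta>1 \<in> \<Theta>" and t1ne: "\<theta>1 \<noteq> \<theta>bar" using \<epsilon> unfolding K\<epsilon>_def by auto
    have lt1: "Mf \<theta>1 < Mf \<theta>bar" using bar_max[OF t1\<Theta> t1ne] unfolding Mf_def f_def \<mu>_def .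
    obtain \<theta>0 where t0: "\<theta>0 \<in> \<Theta>" and int0: "integrable \<mu> (f \<theta>0)"
    proof (cases "Mf \<theta>1 = 0")
      case True
      then have "Mf \<theta>bar \<noteq> 0" using lt1 by simp
      then have "integrable \<mu> (f \<theta>bar)" unfolding Mf_def using not_integrable_integral_eq by blast
      then show ?thesis using that bar_in by blast
    next
      case False
      then have "integrable \<mu> (f \<theta>1)" unfolding Mf_def using not_integrable_integral_eq by blast
      then show ?thesis using that t1\<Theta> by blast
    qed
    interpret mu: prob_space \<mu> by (rule prob\<mu>)
    obtain Kg where Kg: "\<forall>y. gy y \<le> Kg + \<bar>profiled \<Psi> x off \<theta>0 y\<bar>" using g_dom[OF ctx t0] by blast
    have intg: "integrable \<mu> gy"
    proof (rule Bochner_Integration.integrable_bound[where f="\<lambda>y. Kg + \<bar>f \<theta>0 y\<bar>"])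
      show "integrable \<mu> (\<lambda>y. Kg + \<bar>f \<theta>0 y\<bar>)" using int0 by simp
      show "AE y in \<mu>. norm (gy y) \<le> norm (Kg + \<bar>f \<theta>0 y\<bar>)"
      proof (rule AE_I2)
        fix y :: "nat^'p"
        have "0 < gy y" by (rule gy_pos)
        moreover have "gy y \<le> Kg + \<bar>f \<theta>0 y\<bar>" using Kg unfolding f_def by blast
        ultimately show "norm (gy y) \<le> norm (Kg + \<bar>f \<theta>0 y\<bar>)" by simp
      qed
    qed simp
    obtain C where C: "\<forall>\<theta>\<in>\<Theta>. \<forall>\<theta>'\<in>\<Theta>. \<forall>y. \<bar>profiled \<Psi> x off \<theta> y - profiled \<Psi> x off \<theta>' y\<bar> \<le> C * gy y"
      using L_glob[OF ctx] by blast
    have intf: "integrable \<mu> (f \<theta>)" if t: "\<theta> \<in> \<Theta>" for \<theta>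
    proof (rule Bochner_Integration.integrable_bound[where f="\<lambda>y. \<bar>f \<theta>0 y\<bar> + C * gy y"])
      show "integrable \<mu> (\<lambda>y. \<bar>f \<theta>0 y\<bar> + C * gy y)" using int0 intg by simp
      show "AE y in \<mu>. norm (f \<theta> y) \<le> norm (\<bar>f \<theta>0 y\<bar> + C * gy y)"
      proof (rule AE_I2)
        fix y :: "nat^'p"
        have d: "\<bar>f \<theta> y - f \<theta>0 y\<bar> \<le> C * gy y" using C t t0 unfolding f_def by blast
        have "0 \<le> C * gy y" using d by linarith
        then show "norm (f \<theta> y) \<le> norm (\<bar>f \<theta>0 y\<bar> + C * gy y)" using d by simp
      qed
    qed simp
    define Eg where "Eg = (\<integral>y. gy y \<partial>\<mu>)"
    have Eg0: "Eg \<ge> 0" unfolding Eg_def using gy_pos by (intro integral_nonneg_AE) (auto intro: less_imp_le)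
    have Mf_cont: "continuous_on \<Theta> Mf"
      unfolding continuous_on_iff
    proof (intro ballI allI impI)
      fix \<theta> r assume t: "\<theta> \<in> \<Theta>" and r: "(0::real) < r"
      have e1: "r / (2 * (Eg + 1)) > 0" using r Eg0 by simp
      obtain d where d: "d > 0" and hd: "\<forall>\<theta>\<in>\<Theta>. \<forall>\<theta>'\<in>\<Theta>. dist \<theta> \<theta>' < d \<longrightarrow>
          (\<forall>y. \<bar>profiled \<Psi> x off \<theta> y - profiled \<Psi> x off \<theta>' y\<bar> \<le> r / (2 * (Eg + 1)) * gy y)"
        using L_mod[OF ctx e1] by blast
      show "\<exists>d>0. \<forall>\<theta>'\<in>\<Theta>. dist \<theta>' \<theta> < d \<longrightarrow> dist (Mf \<theta>') (Mf \<theta>) < r"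
      proof (intro exI[of _ d] conjI ballI impI)
        show "0 < d" by (rule d)
        fix \<theta>' assume t': "\<theta>' \<in> \<Theta>" and dd: "dist \<theta>' \<theta> < d"
        have "\<bar>Mf \<theta>' - Mf \<theta>\<bar> = \<bar>\<integral>y. f \<theta>' y - f \<theta> y \<partial>\<mu>\<bar>"
          unfolding Mf_def using intf[OF t] intf[OF t'] by simp
        also have "\<dots> \<le> (\<integral>y. \<bar>f \<theta>' y - f \<theta> y\<bar> \<partial>\<mu>)"
          using integral_norm_bound[of \<mu> "\<lambda>y. f \<theta>' y - f \<theta> y"] by simp
        also have "\<dots> \<le> (\<integral>y. r / (2 * (Eg + 1)) * gy y \<partial>\<mu>)"
          using hd t t' dd intf[OF t] intf[OF t'] intg unfolding f_def
          by (intro integral_mono) auto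
        also have "\<dots> = r / (2 * (Eg + 1)) * Eg" unfolding Eg_def by simp
        also have "\<dots> < r"
        proof -
          have "r / (2 * (Eg + 1)) * Eg = r * (Eg / (2 * (Eg + 1)))" by simp
          also have "\<dots> < r * 1" using r Eg0 by (intro mult_strict_left_mono) (auto simp: field_simps)
          finally show ?thesis by simp
        qed
        finally show "dist (Mf \<theta>') (Mf \<theta>) < r" by (simp add: dist_real_def)
      qed
    qed
    have cK: "compact K\<epsilon>"
    proof -
      have "K\<epsilon> = \<Theta> \<inter> - ball \<theta>bar \<epsilon>" unfolding K\<epsilon>_def by (auto simp: dist_commute)
      moreover have "closed (- ball \<theta>bar \<epsilon>)" by (simp add: open_ball closed_Compl)
      ultimately show ?thesis using A1 by (simp add: compact_Int_closed)
    qed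
    have K\<Theta>: "K\<epsilon> \<subseteq> \<Theta>" unfolding K\<epsilon>_def by auto
    obtain \<theta>2 where t2: "\<theta>2 \<in> K\<epsilon>" and max2: "\<forall>\<theta>\<in>K\<epsilon>. Mf \<theta> \<le> Mf \<theta>2"
      using continuous_attains_sup[OF cK False continuous_on_subset[OF Mf_cont K\<Theta>]] by blast
    have t2ne: "\<theta>2 \<noteq> \<theta>bar" and t2\<Theta>: "\<theta>2 \<in> \<Theta>" using t2 \<epsilon> unfolding K\<epsilon>_def by auto
    define \<delta> where "\<delta> = Mf \<theta>bar - Mf \<theta>2"
    have \<delta>: "\<delta> > 0" using bar_max[OF t2\<Theta> t2ne] unfolding \<delta>_def Mf_def f_def \<mu>_def by simp
    define \<tau> where "\<tau> = min (\<delta>/4) 1"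
    have \<tau>: "\<tau> > 0" using \<delta> unfolding \<tau>_def by simp
    define e where "e = \<delta> / (4 * (Eg + 1))"
    have e: "e > 0" using \<delta> Eg0 unfolding e_def by simp
    have e_eq: "e * (Eg + 1) = \<delta> / 4" using Eg0 unfolding e_def by (simp add: field_simps)
    obtain d where d: "d > 0" and hd: "\<forall>\<theta>\<in>\<Theta>. \<forall>\<theta>'\<in>\<Theta>. dist \<theta> \<theta>' < d \<longrightarrow>
          (\<forall>y. \<bar>profiled \<Psi> x off \<theta> y - profiled \<Psi> x off \<theta>' y\<bar> \<le> e * gy y)"
      using L_mod[OF ctx e] by blast
    obtain Fs where Fs: "Fs \<subseteq> K\<epsilon>" "finite Fs" "K\<epsilon> \<subseteq> (\<Union>t\<in>Fs. ball t d)"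
    proof (rule compactE_image[OF cK, of K\<epsilon> "\<lambda>t. ball t d"])
      show "K\<epsilon> \<subseteq> (\<Union>t\<in>K\<epsilon>. ball t d)"
      proof
        fix t assume "t \<in> K\<epsilon>"
        then show "t \<in> (\<Union>t\<in>K\<epsilon>. ball t d)" using d by (intro UN_I[of t]) auto
      qed
    qed auto
    define H where "H = insert gy (f ` insert \<theta>bar Fs)"
    have finH: "finite H" unfolding H_def using Fs by simp
    have intH: "integrable \<mu> h" if "h \<in> H" for h
    proof -
      have "h = gy \<or> (\<exists>t\<in>insert \<theta>bar Fs. h = f t)" using that unfolding H_def by blast
      moreover have "insert \<theta>bar Fs \<subseteq> \<Theta>" using bar_in Fs(1) K\<Theta> by blast
      ultimately show ?thesis using intg intf by blast
    qed
    define Dv where "Dv h n = {\<omega>\<in>space M. \<tau> \<le> \<bar>(\<Sum>i<n. h (Y i \<omega>))/real n - integral\<^sup>L \<mu> h\<bar>}" for h n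
    have hYm: "(\<lambda>\<omega>. h (Y i \<omega>)) \<in> borel_measurable M" for h :: "nat^'p \<Rightarrow> real" and i
      by (rule measurable_compose[OF measY borel_measurable_count_space])
    have Dv_meas: "Dv h n \<in> sets M" for h n
    proof -
      have "(\<lambda>\<omega>. \<bar>(\<Sum>i<n. h (Y i \<omega>))/real n - integral\<^sup>L \<mu> h\<bar>) \<in> borel_measurable M"
        using hYm by simp
      then have "Measurable.pred M (\<lambda>\<omega>. \<tau> \<le> \<bar>(\<Sum>i<n. h (Y i \<omega>))/real n - integral\<^sup>L \<mu> h\<bar>)"
        by (rule pred_const_le) simp
      then show ?thesis unfolding Dv_def pred_def .
    qed
    have wl: "(\<lambda>n. measure M (Dv h n)) \<longlonglongrightarrow> 0" if "h \<in> H" for h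
      unfolding Dv_def by (rule wlln_count[OF P indep law' intH[OF that] \<tau>])
    have sumlim: "(\<lambda>n. \<Sum>h\<in>H. measure M (Dv h n)) \<longlonglongrightarrow> 0"
      by (rule tendsto_null_sum) (rule wl)
    have incl: "E n \<subseteq> (\<Union>h\<in>H. Dv h n)" if n: "n \<ge> 1" for n
    proof
      fix \<omega> assume w: "\<omega> \<in> E n"
      then have \<omega>: "\<omega> \<in> space M" and far: "\<epsilon> < dist (\<theta>hat n \<omega>) \<theta>bar" unfolding E_def by auto
      show "\<omega> \<in> (\<Union>h\<in>H. Dv h n)"
      proof (rule ccontr)
        assume "\<omega> \<notin> (\<Union>h\<in>H. Dv h n)"
        then have close: "\<bar>(\<Sum>i<n. h (Y i \<omega>))/real n - integral\<^sup>L \<mu> h\<bar> < \<tau>" if "h \<in> H" for h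
        proof -
          have "\<omega> \<notin> Dv h n" using that \<open>\<omega> \<notin> (\<Union>h\<in>H. Dv h n)\<close> by blast
          then show ?thesis using \<omega> unfolding Dv_def by auto
        qed
        define th where "th = \<theta>hat n \<omega>"
        have th\<Theta>: "th \<in> \<Theta>" unfolding th_def by (rule hat_in[OF n \<omega>])
        then have thK: "th \<in> K\<epsilon>" using far unfolding K\<epsilon>_def th_def by auto
        then obtain t where tF: "t \<in> Fs" and tb: "th \<in> ball t d" using Fs(3) by blast
        have tK: "t \<in> K\<epsilon>" using tF Fs(1) by blast
        then have t\<Theta>: "t \<in> \<Theta>" using K\<Theta> by blast
        have dtt: "dist th t < d" using tb by (simp add: dist_commute)
        have pw: "f th y \<le> f t y + e * gy y" for y
        proof -
          have "\<bar>f th y - f t y\<bar> \<le> e * gy y" using hd th\<Theta> t\<Theta> dtt unfolding f_def by blast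
          then show ?thesis using abs_le_D1 by fastforce
        qed
        have npos: "real n > 0" using n by simp
        have h1: "(\<Sum>i<n. f th (Y i \<omega>))/real n \<le> (\<Sum>i<n. f t (Y i \<omega>))/real n + e * ((\<Sum>i<n. gy (Y i \<omega>))/real n)"
        proof -
          have "(\<Sum>i<n. f th (Y i \<omega>)) \<le> (\<Sum>i<n. f t (Y i \<omega>) + e * gy (Y i \<omega>))"
            by (rule sum_mono) (rule pw)
          also have "\<dots> = (\<Sum>i<n. f t (Y i \<omega>)) + e * (\<Sum>i<n. gy (Y i \<omega>))"
            by (simp add: sum.distrib sum_distrib_left)
          finally have "(\<Sum>i<n. f th (Y i \<omega>))/real n \<le> ((\<Sum>i<n. f t (Y i \<omega>)) + e * (\<Sum>i<n. gy (Y i \<omega>)))/real n"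
            using npos by (intro divide_right_mono) auto
          then show ?thesis by (simp add: add_divide_distrib)
        qed
        have h2: "(\<Sum>i<n. f \<theta>bar (Y i \<omega>))/real n \<le> (\<Sum>i<n. f th (Y i \<omega>))/real n"
          using hat_max[OF n \<omega> bar_in] unfolding f_def th_def .
        have inH: "f \<theta>bar \<in> H" "f t \<in> H" "gy \<in> H" unfolding H_def using tF by auto
        have h3: "\<bar>(\<Sum>i<n. f \<theta>bar (Y i \<omega>))/real n - Mf \<theta>bar\<bar> < \<tau>"
          using close[OF inH(1)] unfolding Mf_def by simp
        have h4: "\<bar>(\<Sum>i<n. f t (Y i \<omega>))/real n - Mf t\<bar> < \<tau>"
          using close[OF inH(2)] unfolding Mf_def by simp
        have h5: "\<bar>(\<Sum>i<n. gy (Y i \<omega>))/real n - Eg\<bar> < \<tau>"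
          using close[OF inH(3)] unfolding Eg_def by simp
        have "(\<Sum>i<n. gy (Y i \<omega>))/real n \<le> Eg + 1" using h5 unfolding \<tau>_def by linarith
        then have h6: "e * ((\<Sum>i<n. gy (Y i \<omega>))/real n) \<le> \<delta> / 4"
        proof -
          have "e * ((\<Sum>i<n. gy (Y i \<omega>))/real n) \<le> e * (Eg + 1)"
            by (rule mult_left_mono) (use \<open>(\<Sum>i<n. gy (Y i \<omega>))/real n \<le> Eg + 1\<close> e in auto)
          then show ?thesis using e_eq by simp
        qed
        have h7: "Mf t \<le> Mf \<theta>bar - \<delta>" using max2 tK unfolding \<delta>_def by auto
        have "\<tau> \<le> \<delta>/4" unfolding \<tau>_def by simp
        then show False using h1 h2 h3 h4 h6 h7 \<delta> by linarith
      qed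
    qed
    have le: "measure M (E n) \<le> (\<Sum>h\<in>H. measure M (Dv h n))" if n: "n \<ge> 1" for n
    proof -
      have "measure M (E n) \<le> measure M (\<Union>h\<in>H. Dv h n)"
        using incl[OF n] Dv_meas finH by (intro finite_measure_mono) auto
      also have "\<dots> \<le> (\<Sum>h\<in>H. measure M (Dv h n))"
        using Dv_meas finH by (intro finite_measure_subadditive_finite) auto
      finally show ?thesis .
    qed
    have "(\<lambda>n. measure M (E n)) \<longlonglongrightarrow> 0"
    proof (rule tendsto_sandwich[OF _ _ tendsto_const sumlim])
      show "\<forall>\<^sub>F n in sequentially. 0 \<le> measure M (E n)" by simp
      show "\<forall>\<^sub>F n in sequentially. measure M (E n) \<le> (\<Sum>h\<in>H. measure M (Dv h n))"
        unfolding eventually_sequentially using le by blast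
    qed
    then show ?thesis by (simp add: E_def)
  qed
qed


end
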